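(* Let $\mu>0$. For every $n\in\mathbb{N}$ with $n>1$ and every $f\in C([0,1])$, $$\|\mathscr{L}_n^K f-f\|_\infty\le \omega\!\left(f_\mu,\tfrac{1}{\sqrt{n+1}}\right)\ln(2+\mu)\left\{1+\frac{1}{2\sqrt{n+1}}+\sqrt2\right\}+\omega(f_\mu,\gamma_n)\ln(2+\mu),$$ where $\gamma_n:=\max_{x\in[0,1]}|a_{n+1}(x)-x|$.
   Context: Fix $\mu>0$. Let $\ln_\mu(x):=\ln(1+\mu+x)$ for $x\in[0,1]$, and for $f:[0,1]\to\mathbb{R}$ let $f_\mu(x):=f(x)/\ln_\mu(x)$. Let $p_{n,k}(y):=\binom{n}{k}y^k(1-y)^{n-k}$ and $a_{n+1}(x):=\dfrac{\ln\left(1+\frac{x}{(n+1)(1+\mu)}\right)}{\ln\left(1+\frac{1}{(n+1)(1+\mu)}\right)}$, $x\in[0,1]$. For $n\in\mathbb{N}$ define $\mathscr{L}_n^K f(x):=\ln_\mu(x)\sum_{k=0}^n p_{n,k}(a_{n+1}(x))\,(n+1)\int_{k/(n+1)}^{(k+1)/(n+1)} f_\mu(t)\,dt$, $x\in[0,1]$. For $g\in C([0,1])$ and $\delta>0$, $\omega(g,\delta):=\sup\{|g(t)-g(x)|: x,t\in[0,1],\ |t-x|\le\delta\}$; $\|\cdot\|_\infty$ is the sup norm on $[0,1]$. *)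

theory Defs
  imports "HOL-Analysis.Analysis"
begin

definition ln_mu :: "real \<Rightarrow> real \<Rightarrow> real" where
  "ln_mu \<mu> x = ln (1 + \<mu> + x)"

definition f_mu :: "real \<Rightarrow> (real \<Rightarrow> real) \<Rightarrow> real \<Rightarrow> real" where
  "f_mu \<mu> f x = f x / ln_mu \<mu> x"

definition bern :: "nat \<Rightarrow> nat \<Rightarrow> real \<Rightarrow> real" where
  "bern n k y = real (n choose k) * y ^ k * (1 - y) ^ (n - k)"

(* a_{n+1}(x); the argument m plays the role of n+1 *)
definition a_seq :: "real \<Rightarrow> nat \<Rightarrow> real \<Rightarrow> real" where
  "a_seq \<mu> m x = ln (1 + x / (real m * (1 + \<mu>))) / ln (1 + 1 / (real m * (1 + \<mu>)))"

definition LK :: "real \<Rightarrow> nat \<Rightarrow> (real \<Rightarrow> real) \<Rightarrow> real \<Rightarrow> real" where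
  "LK \<mu> n f x = ln_mu \<mu> x * (\<Sum>k=0..n. bern n k (a_seq \<mu> (n+1) x) *
      (real (n+1) * integral {real k / real (n+1) .. real (k+1) / real (n+1)} (f_mu \<mu> f)))"

definition modc :: "(real \<Rightarrow> real) \<Rightarrow> real \<Rightarrow> real" where
  "modc g \<delta> = Sup {\<bar>g t - g x\<bar> | x t. x \<in> {0..1} \<and> t \<in> {0..1} \<and> \<bar>t - x\<bar> \<le> \<delta>}"

definition supn :: "(real \<Rightarrow> real) \<Rightarrow> real" where
  "supn g = Sup ((\<lambda>x. \<bar>g x\<bar>) ` {0..1})"

definition gamma_n :: "real \<Rightarrow> nat \<Rightarrow> real" where
  "gamma_n \<mu> n = Sup ((\<lambda>x. \<bar>a_seq \<mu> (n+1) x - x\<bar>) ` {0..1})"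

end

theory Submission
  imports Defs
begin

lemma bern_eq: "bern n k y = Bernstein n k y"
  by (simp add: bern_def Bernstein_def)

lemma modc_le:
  assumes g: "continuous_on {0..1} g" and x: "x \<in> {0..1}" and t: "t \<in> {0..1}"
    and d: "\<bar>t - x\<bar> \<le> \<delta>"
  shows "\<bar>g t - g x\<bar> \<le> modc g \<delta>"
proof -
  have "compact (g ` {0..1})" by (rule compact_continuous_image[OF g]) simp
  then obtain B where B: "\<And>z. z \<in> {0..1} \<Longrightarrow> \<bar>g z\<bar> \<le> B"
    by (metis (no_types, lifting) bounded_iff compact_imp_bounded image_eqI real_norm_def)
  have bdd: "bdd_above {\<bar>g t - g x\<bar> | x t. x \<in> {0..1} \<and> t \<in> {0..1} \<and> \<bar>t - x\<bar> \<le> \<delta>}"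
  proof (rule bdd_aboveI[where M="2*B"])
    fix v assume "v \<in> {\<bar>g t - g x\<bar> | x t. x \<in> {0..1} \<and> t \<in> {0..1} \<and> \<bar>t - x\<bar> \<le> \<delta>}"
    then obtain x t where "v = \<bar>g t - g x\<bar>" "x \<in> {0..1}" "t \<in> {0..1}" by blast
    with B[of x] B[of t] show "v \<le> 2*B" by linarith
  qed
  show ?thesis unfolding modc_def
    by (rule cSup_upper[OF _ bdd]) (use x t d in blast)
qed

lemma modc_nonneg:
  assumes g: "continuous_on {0..1} g" and "\<delta> \<ge> 0"
  shows "modc g \<delta> \<ge> 0"
  using modc_le[OF g, of 0 0 \<delta>] assms by simp

lemma modc_mult:
  assumes g: "continuous_on {0..1} g" and x: "x \<in> {0..1}" and t: "t \<in> {0..1}"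
    and d: "\<bar>t - x\<bar> \<le> real m * \<delta>" and dp: "\<delta> > 0"
  shows "\<bar>g t - g x\<bar> \<le> real m * modc g \<delta>"
proof (cases "m = 0")
  case True
  then have "t = x" using d by simp
  then show ?thesis using modc_nonneg[OF g] dp by simp
next
  case False
  then have mp: "real m > 0" by simp
  define z where "z i = x + real i * (t - x) / real m" for i :: nat
  have zin: "z i \<in> {0..1}" if "i \<le> m" for i
  proof -
    have l: "real i / real m \<le> 1" "0 \<le> real i / real m" using that mp by auto
    have "z i = (1 - real i / real m) * x + (real i / real m) * t"
      unfolding z_def using mp by (simp add: field_simps)
    moreover have "0 \<le> (1 - real i / real m) * x + (real i / real m) * t"
      using x t l by (intro add_nonneg_nonneg mult_nonneg_nonneg) auto
    moreover have "(1 - real i / real m) * x + (real i / real m) * t \<le> (1 - real i / real m) * 1 + (real i / real m) * 1"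
      using x t l by (intro add_mono mult_left_mono) auto
    ultimately show ?thesis by auto
  qed
  have z0: "z 0 = x" and zm: "z m = t" unfolding z_def using mp by auto
  have "g t - g x = (\<Sum>i<m. g (z (Suc i)) - g (z i))"
    by (subst sum_lessThan_telescope) (simp add: z0 zm)
  hence "\<bar>g t - g x\<bar> \<le> (\<Sum>i<m. \<bar>g (z (Suc i)) - g (z i)\<bar>)"
    by (metis sum_abs)
  also have "\<dots> \<le> (\<Sum>i<m. modc g \<delta>)"
  proof (rule sum_mono)
    fix i assume "i \<in> {..<m}"
    hence i: "Suc i \<le> m" "i \<le> m" by auto
    have "z (Suc i) - z i = (t - x) / real m" unfolding z_def using mp by (simp add: field_simps)
    hence "\<bar>z (Suc i) - z i\<bar> = \<bar>t - x\<bar> / real m" using mp by simp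
    also have "\<dots> \<le> \<delta>" using d mp by (simp add: divide_le_eq mult.commute)
    finally show "\<bar>g (z (Suc i)) - g (z i)\<bar> \<le> modc g \<delta>"
      by (rule modc_le[OF g zin[OF i(2)] zin[OF i(1)]])
  qed
  also have "\<dots> = real m * modc g \<delta>" by simp
  finally show ?thesis .
qed

lemma modc_quad:
  assumes g: "continuous_on {0..1} g" and x: "x \<in> {0..1}" and t: "t \<in> {0..1}"
    and dp: "\<delta> > 0"
  shows "\<bar>g t - g x\<bar> \<le> modc g \<delta> * (3/2 + (t - x)^2 / (2 * \<delta>^2))"
proof -
  define l where "l = \<bar>t - x\<bar> / \<delta>"
  have l0: "l \<ge> 0" unfolding l_def using dp by simp
  define m where "m = nat (ceiling l)"
  have m1: "real m \<ge> l" unfolding m_def by linarith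
  have m2: "real m \<le> l + 1" unfolding m_def using l0 by linarith
  have "\<bar>t - x\<bar> \<le> real m * \<delta>" using m1 dp unfolding l_def by (simp add: divide_le_eq)
  from modc_mult[OF g x t this dp] have "\<bar>g t - g x\<bar> \<le> real m * modc g \<delta>" .
  also have "\<dots> \<le> (3/2 + l^2/2) * modc g \<delta>"
  proof (rule mult_right_mono)
    have "0 \<le> (l - 1)^2" by simp
    hence "l \<le> (l^2 + 1)/2" by (simp add: power2_eq_square algebra_simps)
    thus "real m \<le> 3/2 + l^2/2" using m2 by simp
    show "0 \<le> modc g \<delta>" using modc_nonneg[OF g] dp by simp
  qed
  also have "l^2 = (t-x)^2 / \<delta>^2" unfolding l_def by (simp add: power_divide)
  finally show ?thesis by (simp add: mult.commute)
qed



lemma moment2: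
  fixes y :: real
  shows "real (n+1) * (\<Sum>k\<le>n. Bernstein n k y * (real k / real (n+1) - y)^2)
     = (real n * y * (1 - y) + y^2) / real (n+1)"
proof -
  define c where "c = real (n+1)"
  have cp: "c > 0" unfolding c_def by simp
  have e: "Bernstein n k y * (real k / c - y)^2 =
      (real k * (real k - 1) * Bernstein n k y + real k * Bernstein n k y) / c^2
      - 2 * y / c * (real k * Bernstein n k y) + y^2 * Bernstein n k y" for k
    using cp by (simp add: field_simps power2_eq_square)
  have "(\<Sum>k\<le>n. Bernstein n k y * (real k / c - y)^2)
     = (\<Sum>k\<le>n. real k * (real k - 1) * Bernstein n k y + real k * Bernstein n k y) / c^2
       - 2 * y / c * (\<Sum>k\<le>n. real k * Bernstein n k y) + y^2 * (\<Sum>k\<le>n. Bernstein n k y)"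
    unfolding e by (simp only: sum.distrib sum_subtractf flip: sum_divide_distrib sum_distrib_left)
  also have "\<dots> = (real n * (real n - 1) * y^2 + real n * y) / c^2 - 2 * y / c * (real n * y) + y^2"
    by (simp only: sum.distrib sum_kk_Bernstein sum_k_Bernstein sum_Bernstein mult_1_right)
  finally have "c * (\<Sum>k\<le>n. Bernstein n k y * (real k / c - y)^2) =
     c * ((real n * (real n - 1) * y^2 + real n * y) / c^2 - 2 * y / c * (real n * y) + y^2)" by simp
  also have "\<dots> = ((real n*(real n - 1)*y^2 + real n*y) - 2*y*(real n*y)*c + y^2*c^2)/c"
    using cp by (simp add: field_simps power2_eq_square)
  also have "(real n*(real n - 1)*y^2 + real n*y) - 2*y*(real n*y)*c + y^2*c^2 = real n*y*(1-y)+y^2"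
    unfolding c_def by (simp add: algebra_simps power2_eq_square)
  finally show ?thesis unfolding c_def .
qed

lemma sq_ineq: "((a::real) + b)^2 \<le> 2 * a^2 + 2 * b^2"
proof -
  have "0 \<le> (a - b)^2" by simp
  thus ?thesis by (simp add: power2_eq_square algebra_simps)
qed

lemma kant:
  assumes g: "continuous_on {0..1} g" and y: "y \<in> {0..1}" and n2: "n \<ge> 2"
  shows "\<bar>(\<Sum>k=0..n. bern n k y * (real (n+1) * integral {real k / real (n+1) .. real (k+1) / real (n+1)} g)) - g y\<bar>
     \<le> modc g (1 / sqrt (real n + 1)) * (1 + 1 / (2 * sqrt (real n + 1)) + sqrt 2)"
proof -
  define c where "c = real (n+1)"
  have cp: "c > 0" and c3: "c \<ge> 3" unfolding c_def using n2 by auto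
  define \<delta> where "\<delta> = 1 / sqrt c"
  have dp: "\<delta> > 0" unfolding \<delta>_def using cp by simp
  have d2: "\<delta>^2 = 1 / c" unfolding \<delta>_def using cp by (simp add: power_divide)
  define \<omega> where "\<omega> = modc g \<delta>"
  have w0: "\<omega> \<ge> 0" unfolding \<omega>_def using modc_nonneg[OF g] dp by simp
  define A where "A k = \<omega> * (3/2 + 1/c + c * (real k / c - y)^2)" for k :: nat
  have Ik: "\<bar>c * integral {real k / c .. real (k+1) / c} g - g y\<bar> \<le> A k" if k: "k \<le> n" for k
  proof -
    have ab: "real k / c \<le> real (k+1) / c" using cp by (simp add: divide_right_mono)
    have a0: "0 \<le> real k / c" using cp by simp
    have b1: "real (k+1) / c \<le> 1" using cp k unfolding c_def by simp
    have sub: "{real k / c .. real (k+1) / c} \<subseteq> {0..1}" using a0 b1 by auto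
    have gc: "continuous_on {real k / c .. real (k+1) / c} g" using continuous_on_subset[OF g sub] .
    have int: "g integrable_on {real k / c .. real (k+1) / c}"
      by (rule integrable_continuous_interval[OF gc])
    have len: "real (k+1) / c - real k / c = 1 / c" using cp by (simp add: field_simps)
    have "integral {real k / c .. real (k+1) / c} (\<lambda>t. g t - g y)
        = integral {real k / c .. real (k+1) / c} g - g y / c"
      using integral_diff[OF int integrable_const_ivl[of "g y"]] ab len by (simp add: field_simps)
    hence eq: "c * integral {real k / c .. real (k+1) / c} g - g y
        = c * integral {real k / c .. real (k+1) / c} (\<lambda>t. g t - g y)"
      using cp by (simp add: field_simps)
    have "norm (integral {real k / c .. real (k+1) / c} (\<lambda>t. g t - g y)) \<le> A k * (real (k+1) / c - real k / c)"
    proof (rule integral_bound[OF ab])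
      show "continuous_on {real k / c..real (k + 1) / c} (\<lambda>t. g t - g y)"
        by (intro continuous_intros gc)
      fix t assume t: "t \<in> {real k / c..real (k + 1) / c}"
      hence t01: "t \<in> {0..1}" using sub by auto
      have q: "\<bar>g t - g y\<bar> \<le> \<omega> * (3/2 + (t - y)^2 / (2 * \<delta>^2))"
        unfolding \<omega>_def by (rule modc_quad[OF g y t01 dp])
      have tk: "0 \<le> t - real k / c" "t - real k / c \<le> 1 / c" using t len by auto
      have "(t - real k / c)^2 \<le> (1/c)^2" using tk by (intro power_mono) auto
      moreover have "(t - y)^2 \<le> 2 * (t - real k / c)^2 + 2 * (real k / c - y)^2"
        using sq_ineq[of "t - real k / c" "real k / c - y"] by simp
      ultimately have tt: "(t - y)^2 \<le> 2 / c^2 + 2 * (real k / c - y)^2" by (simp add: power_divide)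
      have "(t - y)^2 / (2 * \<delta>^2) = c * (t - y)^2 / 2" unfolding d2 using cp by (simp add: field_simps)
      also have "\<dots> \<le> c * (2 / c^2 + 2 * (real k / c - y)^2) / 2"
        using tt cp by (intro divide_right_mono mult_left_mono) auto
      also have "\<dots> = 1 / c + c * (real k / c - y)^2" using cp by (simp add: field_simps power2_eq_square)
      finally have "(t - y)^2 / (2 * \<delta>^2) \<le> 1 / c + c * (real k / c - y)^2" .
      hence "\<omega> * (3/2 + (t - y)^2 / (2 * \<delta>^2)) \<le> A k"
        unfolding A_def using w0 by (intro mult_left_mono) auto
      with q show "norm (g t - g y) \<le> A k" by simp
    qed
    hence "\<bar>integral {real k / c .. real (k+1) / c} (\<lambda>t. g t - g y)\<bar> \<le> A k / c" using len by simp
    hence "c * \<bar>integral {real k / c .. real (k+1) / c} (\<lambda>t. g t - g y)\<bar> \<le> A k"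
      using cp by (simp add: field_simps)
    thus ?thesis unfolding eq using cp by (simp add: abs_mult)
  qed
  have sum1: "(\<Sum>k\<le>n. Bernstein n k y) = 1" by simp
  have eqS: "(\<Sum>k=0..n. bern n k y * (c * integral {real k / c .. real (k+1) / c} g)) - g y
      = (\<Sum>k\<le>n. Bernstein n k y * (c * integral {real k / c .. real (k+1) / c} g - g y))"
  proof -
    have "(\<Sum>k\<le>n. Bernstein n k y * (c * integral {real k / c .. real (k+1) / c} g - g y))
        = (\<Sum>k\<le>n. Bernstein n k y * (c * integral {real k / c .. real (k+1) / c} g)) - (\<Sum>k\<le>n. Bernstein n k y) * g y"
      by (simp only: right_diff_distrib sum_subtractf sum_distrib_right)
    thus ?thesis by (simp only: sum1 bern_eq atLeast0AtMost mult_1_left)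
  qed
  have "\<bar>(\<Sum>k=0..n. bern n k y * (c * integral {real k / c .. real (k+1) / c} g)) - g y\<bar>
      \<le> (\<Sum>k\<le>n. \<bar>Bernstein n k y * (c * integral {real k / c .. real (k+1) / c} g - g y)\<bar>)"
    unfolding eqS by (rule sum_abs)
  also have "\<dots> \<le> (\<Sum>k\<le>n. Bernstein n k y * A k)"
    using Ik y by (intro sum_mono) (simp add: abs_mult Bernstein_nonneg mult_left_mono)
  also have "\<dots> = \<omega> * (3/2 + 1/c) * (\<Sum>k\<le>n. Bernstein n k y)
       + \<omega> * (c * (\<Sum>k\<le>n. Bernstein n k y * (real k / c - y)^2))"
  proof -
    have "Bernstein n k y * A k = \<omega> * (3/2 + 1/c) * Bernstein n k y + \<omega> * (c * (Bernstein n k y * (real k / c - y)^2))" for k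
      unfolding A_def by (simp add: algebra_simps)
    hence "(\<Sum>k\<le>n. Bernstein n k y * A k) = (\<Sum>k\<le>n. \<omega> * (3/2 + 1/c) * Bernstein n k y + \<omega> * (c * (Bernstein n k y * (real k / c - y)^2)))"
      by simp
    also have "\<dots> = \<omega> * (3/2 + 1/c) * (\<Sum>k\<le>n. Bernstein n k y)
       + \<omega> * (c * (\<Sum>k\<le>n. Bernstein n k y * (real k / c - y)^2))"
      by (simp only: sum.distrib flip: sum_distrib_left)
    finally show ?thesis .
  qed
  also have "\<dots> = \<omega> * (3/2 + 1/c) + \<omega> * ((real n * y * (1 - y) + y^2) / c)"
    using moment2[of n y] unfolding c_def by simp
  also have "\<dots> \<le> \<omega> * (3/2 + 1/c) + \<omega> * (1/2)"
  proof -
    have "y * (1 - y) \<le> 1/4" using sum_squares_ge_zero[of "y - 1/2" 0] by (simp add: power2_eq_square algebra_simps)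
    hence h1: "real n * (y * (1 - y)) \<le> real n * (1/4)" by (intro mult_left_mono) auto
    have h2: "y^2 \<le> 1" using y by (simp add: power_le_one)
    have h3: "real n \<ge> 2" using n2 by simp
    have "real n * y * (1 - y) + y^2 \<le> real n * (1/4) + 1" using h1 h2 by (simp only: mult.assoc)
    also have "\<dots> \<le> c / 2" unfolding c_def using h3 by simp
    finally have "real n * y * (1 - y) + y^2 \<le> c / 2" .
    hence "(real n * y * (1 - y) + y^2) / c \<le> 1/2" using cp by (simp add: divide_le_eq)
    thus ?thesis using w0 by (intro add_left_mono mult_left_mono) auto
  qed
  also have "\<dots> \<le> \<omega> * (1 + 1 / (2 * sqrt c) + sqrt 2)"
  proof -
    have "4/3 \<le> sqrt 2" by (rule real_le_rsqrt) (simp add: power2_eq_square)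
    moreover have "1/c \<le> 1/3" using c3 by (simp add: divide_le_eq)
    moreover have "0 \<le> 1 / (2 * sqrt c)" using cp by simp
    ultimately have "3/2 + 1/c + 1/2 \<le> 1 + 1 / (2 * sqrt c) + sqrt 2" by linarith
    hence "\<omega> * (3/2 + 1/c + 1/2) \<le> \<omega> * (1 + 1 / (2 * sqrt c) + sqrt 2)"
      using w0 by (rule mult_left_mono)
    thus ?thesis by (simp add: distrib_left)
  qed
  finally show ?thesis unfolding \<omega>_def \<delta>_def c_def by (simp add: add.commute)
qed


lemma a_seq_range:
  assumes mu: "\<mu> > 0" and x: "x \<in> {0..1}"
  shows "a_seq \<mu> (n+1) x \<in> {0..1}"
proof -
  define d where "d = real (n+1) * (1 + \<mu>)"
  have dp: "d > 0" unfolding d_def using mu by simp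
  have den: "ln (1 + 1 / d) > 0" using dp by (intro ln_gt_zero) simp
  have n0: "ln (1 + x / d) \<ge> 0" using dp x by (intro ln_ge_zero) simp
  have n1: "ln (1 + x / d) \<le> ln (1 + 1 / d)"
    using dp x by (subst ln_le_cancel_iff) (auto simp: divide_right_mono add_pos_nonneg)
  have "a_seq \<mu> (n+1) x = ln (1 + x / d) / ln (1 + 1 / d)" unfolding a_seq_def d_def by simp
  with den n0 n1 show ?thesis by (simp add: divide_le_eq)
qed

theorem theorem6p1:
  fixes \<mu> :: real and n :: nat and f :: "real \<Rightarrow> real"
  assumes "\<mu> > 0" and "n > 1" and "continuous_on {0..1} f"
  shows "supn (\<lambda>x. LK \<mu> n f x - f x)
    \<le> modc (f_mu \<mu> f) (1 / sqrt (real n + 1)) * ln (2 + \<mu>)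
        * (1 + 1 / (2 * sqrt (real n + 1)) + sqrt 2)
      + modc (f_mu \<mu> f) (gamma_n \<mu> n) * ln (2 + \<mu>)"
proof -
  note mu = assms(1)
  have n2: "n \<ge> 2" using assms(2) by simp
  define g where "g = f_mu \<mu> f"
  have gc: "continuous_on {0..1} g"
  proof -
    have "continuous_on {0..1} (\<lambda>x. f x / ln (1 + \<mu> + x))"
      using mu by (intro continuous_intros assms(3)) auto
    thus ?thesis unfolding g_def f_mu_def[abs_def] ln_mu_def .
  qed
  define \<omega>1 where "\<omega>1 = modc g (1 / sqrt (real n + 1))"
  define \<omega>2 where "\<omega>2 = modc g (gamma_n \<mu> n)"
  define C where "C = 1 + 1 / (2 * sqrt (real n + 1)) + sqrt 2"
  have w1: "\<omega>1 \<ge> 0" unfolding \<omega>1_def by (rule modc_nonneg[OF gc]) simp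
  have C0: "C \<ge> 0" unfolding C_def by simp
  have pt: "\<bar>LK \<mu> n f x - f x\<bar> \<le> ln (2 + \<mu>) * (\<omega>1 * C + \<omega>2)" if x: "x \<in> {0..1}" for x
  proof -
    define L where "L = ln_mu \<mu> x"
    have Lp: "L > 0" unfolding L_def ln_mu_def using mu x by (intro ln_gt_zero) auto
    have Lb: "L \<le> ln (2 + \<mu>)" unfolding L_def ln_mu_def using mu x by (subst ln_le_cancel_iff) auto
    define y where "y = a_seq \<mu> (n+1) x"
    have y: "y \<in> {0..1}" unfolding y_def by (rule a_seq_range[OF mu x])
    define K where "K = (\<Sum>k=0..n. bern n k y * (real (n+1) * integral {real k / real (n+1) .. real (k+1) / real (n+1)} g))"
    have LK: "LK \<mu> n f x = L * K" unfolding LK_def L_def K_def y_def g_def by simp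
    have fx: "f x = L * g x" unfolding g_def f_mu_def L_def using Lp L_def by simp
    have k1: "\<bar>K - g y\<bar> \<le> \<omega>1 * C" unfolding K_def \<omega>1_def C_def by (rule kant[OF gc y n2])
    have gam: "\<bar>y - x\<bar> \<le> gamma_n \<mu> n"
      unfolding gamma_n_def y_def
    proof (rule cSup_upper)
      show "\<bar>a_seq \<mu> (n + 1) x - x\<bar> \<in> (\<lambda>x. \<bar>a_seq \<mu> (n + 1) x - x\<bar>) ` {0..1}" using x by blast
      show "bdd_above ((\<lambda>x. \<bar>a_seq \<mu> (n + 1) x - x\<bar>) ` {0..1})"
      proof (rule bdd_aboveI2[where M=1])
        fix z :: real assume z: "z \<in> {0..1}"
        have "a_seq \<mu> (n+1) z \<in> {0..1}" by (rule a_seq_range[OF mu z])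
        with z show "\<bar>a_seq \<mu> (n + 1) z - z\<bar> \<le> 1" by auto
      qed
    qed
    have k2: "\<bar>g y - g x\<bar> \<le> \<omega>2" unfolding \<omega>2_def by (rule modc_le[OF gc x y gam])
    have "LK \<mu> n f x - f x = L * ((K - g y) + (g y - g x))" unfolding LK fx by (simp add: algebra_simps)
    hence "\<bar>LK \<mu> n f x - f x\<bar> = L * \<bar>(K - g y) + (g y - g x)\<bar>" using Lp by (simp add: abs_mult)
    also have "\<dots> \<le> L * (\<omega>1 * C + \<omega>2)"
      using Lp k1 k2 abs_triangle_ineq[of "K - g y" "g y - g x"] by (intro mult_left_mono) auto
    also have "\<dots> \<le> ln (2 + \<mu>) * (\<omega>1 * C + \<omega>2)"
      using Lb k1 k2 by (intro mult_right_mono) auto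
    finally show ?thesis .
  qed
  have "supn (\<lambda>x. LK \<mu> n f x - f x) \<le> ln (2 + \<mu>) * (\<omega>1 * C + \<omega>2)"
    unfolding supn_def using pt by (intro cSup_least) auto
  thus ?thesis unfolding \<omega>1_def \<omega>2_def C_def g_def by (simp add: algebra_simps)
qed

end
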